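(* Let $C$ be an open cone. A sequence in $C$ is an almost-geodesic for the Hilbert function $H_C$ if and only if it is an almost-geodesic both for the Funk function $F_C$ and for the reverse Funk function $RF_C$.
   Context: $V$ is a finite-dimensional real vector space. An open cone is a nonempty open convex set $C\subset V$ with $\lambda C\subseteq C$ for all $\lambda>0$ and $0\notin C$. Write $x\le_C y$ iff $y-x\in\overline C$; $M_C(y/x):=\inf\{\lambda>0:y\le_C\lambda x\}$; $F_C(y,x):=\log M_C(y/x)$; $RF_C(x,y):=F_C(y,x)$; $H_C(x,y):=F_C(x,y)+F_C(y,x)$ for $x,y\in C$ (these satisfy the triangle inequality). For $d\in\{F_C,RF_C,H_C\}$, an almost-geodesic is a sequence $(x_l)_{l\in\mathbb N}$ in $C$ such that for some $\epsilon>0$, $\sum_{i=1}^l d(x_{i-1},x_i)\le d(x_0,x_l)+\epsilon$ for all $l\ge1$. *)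

theory Defs
  imports "HOL-Analysis.Analysis"
begin

definition open_cone :: "'v::euclidean_space set \<Rightarrow> bool" where
  "open_cone C \<longleftrightarrow> C \<noteq> {} \<and> open C \<and> convex C \<and>
     (\<forall>c>0. \<forall>x\<in>C. c *\<^sub>R x \<in> C) \<and> 0 \<notin> C"

definition cone_le :: "'v::euclidean_space set \<Rightarrow> 'v \<Rightarrow> 'v \<Rightarrow> bool" where
  "cone_le C x y \<longleftrightarrow> y - x \<in> closure C"

definition M_cone :: "'v::euclidean_space set \<Rightarrow> 'v \<Rightarrow> 'v \<Rightarrow> real" where
  "M_cone C y x = Inf {c. c > 0 \<and> cone_le C y (c *\<^sub>R x)}"

definition funk :: "'v::euclidean_space set \<Rightarrow> 'v \<Rightarrow> 'v \<Rightarrow> real" where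
  "funk C y x = ln (M_cone C y x)"

definition rev_funk :: "'v::euclidean_space set \<Rightarrow> 'v \<Rightarrow> 'v \<Rightarrow> real" where
  "rev_funk C x y = funk C y x"

definition hilbert_fn :: "'v::euclidean_space set \<Rightarrow> 'v \<Rightarrow> 'v \<Rightarrow> real" where
  "hilbert_fn C x y = funk C x y + funk C y x"

definition almost_geodesic ::
  "'v::euclidean_space set \<Rightarrow> ('v \<Rightarrow> 'v \<Rightarrow> real) \<Rightarrow> (nat \<Rightarrow> 'v) \<Rightarrow> bool" where
  "almost_geodesic C d x \<longleftrightarrow> (\<forall>l. x l \<in> C) \<and>
     (\<exists>eps>0. \<forall>l\<ge>1. (\<Sum>i=1..l. d (x (i - 1)) (x i)) \<le> d (x 0) (x l) + eps)"

end

theory Submission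
  imports Defs
begin

lemma oc_add:
  assumes "open_cone C" "u \<in> C" "v \<in> C" shows "u + v \<in> C"
proof -
  have c: "convex C" and sc: "\<forall>c>0. \<forall>x\<in>C. c *\<^sub>R x \<in> C" using assms(1) by (auto simp: open_cone_def)
  have "2 *\<^sub>R u \<in> C" "2 *\<^sub>R v \<in> C" using sc assms by auto
  hence "(1/2) *\<^sub>R (2 *\<^sub>R u) + (1/2) *\<^sub>R (2 *\<^sub>R v) \<in> C"
    using c unfolding convex_def by (metis field_sum_of_halves divide_nonneg_nonneg zero_le_numeral zero_le_one)
  thus ?thesis by (simp add: scaleR_add_right[symmetric])
qed

lemma oc_add_cl:
  assumes "open_cone C" "u \<in> C" "v \<in> closure C" shows "u + v \<in> C"
proof -
  have "open C" using assms(1) by (auto simp: open_cone_def)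
  then obtain r where r: "r > 0" "ball u r \<subseteq> C" using assms(2) openE by blast
  obtain w where w: "w \<in> C" "dist w v < r" using assms(3) r(1) closure_approachable by blast
  have "u + v - w \<in> ball u r" using w(2) by (simp add: dist_norm norm_minus_commute)
  hence "u + v - w \<in> C" using r by auto
  from oc_add[OF assms(1) this w(1)] show ?thesis by simp
qed

lemma oc_scale_cl:
  assumes "open_cone C" "c > 0" "v \<in> closure C" shows "c *\<^sub>R v \<in> closure C"
proof -
  have sc: "\<forall>c>0. \<forall>x\<in>C. c *\<^sub>R x \<in> C" using assms(1) by (auto simp: open_cone_def)
  show ?thesis unfolding closure_approachable
  proof (intro allI impI)
    fix e :: real assume e: "e > 0"
    obtain w where w: "w \<in> C" "dist w v < e / c" using assms(3) e assms(2) closure_approachable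
      by (metis divide_pos_pos)
    have "dist (c *\<^sub>R w) (c *\<^sub>R v) = c * dist w v"
      using assms(2) by (simp add: dist_norm scaleR_diff_right[symmetric])
    also have "\<dots> < e" using w(2) assms(2) by (simp add: field_simps)
    finally show "\<exists>y\<in>C. dist y (c *\<^sub>R v) < e" using sc w(1) assms(2) by blast
  qed
qed

lemma oc_add_cl2:
  assumes "open_cone C" "a \<in> closure C" "b \<in> closure C" shows "a + b \<in> closure C"
  unfolding closure_approachable
proof (intro allI impI)
  fix e :: real assume e: "e > 0"
  obtain w1 where w1: "w1 \<in> C" "dist w1 a < e/2" using assms(2) e closure_approachable half_gt_zero by blast
  obtain w2 where w2: "w2 \<in> C" "dist w2 b < e/2" using assms(3) e closure_approachable half_gt_zero by blast
  have "dist (w1 + w2) (a + b) \<le> dist w1 a + dist w2 b"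
    by (simp add: dist_norm) (metis add_diff_add norm_triangle_ineq)
  also have "\<dots> < e" using w1 w2 by simp
  finally show "\<exists>y\<in>C. dist y (a + b) < e" using oc_add[OF assms(1) w1(1) w2(1)] by blast
qed

lemma M_set_ne:
  assumes "open_cone C" "x \<in> C" "y \<in> C"
  shows "\<exists>c. c > 0 \<and> cone_le C y (c *\<^sub>R x)"
proof -
  have "open C" and sc: "\<forall>c>0. \<forall>x\<in>C. c *\<^sub>R x \<in> C" using assms(1) by (auto simp: open_cone_def)
  then obtain r where r: "r > 0" "ball x r \<subseteq> C" using assms(2) openE by blast
  define c where "c = norm y / r + 1"
  have cpos: "c > 0" using r by (simp add: c_def add_nonneg_pos)
  have "norm y < r * c" using r by (simp add: c_def field_simps)
  hence "norm ((1/c) *\<^sub>R y) < r" using cpos by (simp add: field_simps)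
  hence "x - (1/c) *\<^sub>R y \<in> ball x r" by (simp add: dist_norm)
  hence "x - (1/c) *\<^sub>R y \<in> C" using r by auto
  hence "c *\<^sub>R (x - (1/c) *\<^sub>R y) \<in> C" using sc cpos by auto
  hence "c *\<^sub>R x - y \<in> closure C" using cpos closure_subset by (auto simp: scaleR_diff_right)
  thus ?thesis using cpos unfolding cone_le_def by blast
qed

lemma M_pos:
  assumes "open_cone C" "x \<in> C" "y \<in> C"
  shows "M_cone C y x > 0"
proof -
  have "0 \<notin> C" using assms(1) by (auto simp: open_cone_def)
  hence xnz: "x \<noteq> 0" using assms(2) by auto
  have "open C" using assms(1) by (auto simp: open_cone_def)
  then obtain r where r: "r > 0" "ball y r \<subseteq> C" using assms(3) openE by blast
  have lb: "r / norm x \<le> c" if "c > 0 \<and> cone_le C y (c *\<^sub>R x)" for c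
  proof (rule ccontr)
    assume "\<not> r / norm x \<le> c"
    hence "c * norm x < r" using xnz by (simp add: field_simps)
    hence "y - c *\<^sub>R x \<in> ball y r" using that by (simp add: dist_norm)
    hence "y - c *\<^sub>R x \<in> C" using r by auto
    from oc_add_cl[OF assms(1) this] that have "(y - c *\<^sub>R x) + (c *\<^sub>R x - y) \<in> C"
      unfolding cone_le_def by blast
    thus False using \<open>0 \<notin> C\<close> by simp
  qed
  have "r / norm x \<le> M_cone C y x" unfolding M_cone_def
    using M_set_ne[OF assms] lb by (intro cInf_greatest) auto
  moreover have "r / norm x > 0" using r xnz by simp
  ultimately show ?thesis by linarith
qed

lemma M_le:
  assumes "c > 0" "cone_le C y (c *\<^sub>R x)" shows "M_cone C y x \<le> c"
  unfolding M_cone_def using assms by (intro cInf_lower) (auto intro: bdd_belowI[where m=0])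

lemma M_tri:
  assumes "open_cone C" "a \<in> C" "b \<in> C" "c \<in> C"
  shows "M_cone C a c \<le> M_cone C a b * M_cone C b c"
proof -
  have key: "M_cone C a c \<le> s * t" if s: "s > 0" "cone_le C a (s *\<^sub>R b)"
    and t: "t > 0" "cone_le C b (t *\<^sub>R c)" for s t
  proof (rule M_le)
    show "s * t > 0" using s t by simp
    have "s *\<^sub>R (t *\<^sub>R c - b) \<in> closure C" using oc_scale_cl[OF assms(1) s(1)] t(2) by (simp add: cone_le_def)
    from oc_add_cl2[OF assms(1) this] s(2)
    have "s *\<^sub>R (t *\<^sub>R c - b) + (s *\<^sub>R b - a) \<in> closure C" by (simp add: cone_le_def)
    thus "cone_le C a ((s * t) *\<^sub>R c)" by (simp add: cone_le_def algebra_simps)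
  qed
  have pab: "M_cone C a b > 0" using M_pos[OF assms(1) assms(3) assms(2)] .
  have step1: "M_cone C a c / t \<le> M_cone C a b" if t: "t > 0" "cone_le C b (t *\<^sub>R c)" for t
    unfolding M_cone_def[of C a b]
  proof (rule cInf_greatest)
    show "{s. 0 < s \<and> cone_le C a (s *\<^sub>R b)} \<noteq> {}" using M_set_ne[OF assms(1) assms(3) assms(2)] by auto
    fix s assume "s \<in> {s. 0 < s \<and> cone_le C a (s *\<^sub>R b)}"
    hence "M_cone C a c \<le> s * t" using key t by auto
    thus "M_cone C a c / t \<le> s" using t by (simp add: field_simps)
  qed
  have "M_cone C a c / M_cone C a b \<le> M_cone C b c"
    unfolding M_cone_def[of C b c]
  proof (rule cInf_greatest)
    show "{s. 0 < s \<and> cone_le C b (s *\<^sub>R c)} \<noteq> {}" using M_set_ne[OF assms(1) assms(4) assms(3)] by auto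
    fix t assume "t \<in> {s. 0 < s \<and> cone_le C b (s *\<^sub>R c)}"
    hence "M_cone C a c / t \<le> M_cone C a b" "t > 0" using step1 by auto
    thus "M_cone C a c / M_cone C a b \<le> t" using pab by (simp add: field_simps)
  qed
  thus ?thesis using pab by (simp add: field_simps)
qed

lemma funk_tri:
  assumes "open_cone C" "a \<in> C" "b \<in> C" "c \<in> C"
  shows "funk C a c \<le> funk C a b + funk C b c"
proof -
  have p1: "M_cone C a b > 0" using M_pos[OF assms(1) assms(3) assms(2)] .
  have p2: "M_cone C b c > 0" using M_pos[OF assms(1) assms(4) assms(3)] .
  have p3: "M_cone C a c > 0" using M_pos[OF assms(1) assms(4) assms(2)] .
  have "ln (M_cone C a c) \<le> ln (M_cone C a b * M_cone C b c)"
    using M_tri[OF assms] p1 p2 p3 by simp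
  thus ?thesis using p1 p2 by (simp add: funk_def ln_mult)
qed

lemma sum_F:
  assumes "open_cone C" "\<forall>l. x l \<in> C"
  shows "funk C (x 0) (x (Suc m)) \<le> (\<Sum>i=1..Suc m. funk C (x (i - 1)) (x i))"
proof (induction m)
  case 0
  then show ?case by simp
next
  case (Suc l)
  have "funk C (x 0) (x (Suc (Suc l))) \<le> funk C (x 0) (x (Suc l)) + funk C (x (Suc l)) (x (Suc (Suc l)))"
    using funk_tri assms by blast
  then show ?case using Suc by simp
qed

lemma sum_RF:
  assumes "open_cone C" "\<forall>l. x l \<in> C"
  shows "funk C (x (Suc m)) (x 0) \<le> (\<Sum>i=1..Suc m. funk C (x i) (x (i - 1)))"
proof (induction m)
  case 0
  then show ?case by simp
next
  case (Suc l)
  have "funk C (x (Suc (Suc l))) (x 0) \<le> funk C (x (Suc (Suc l))) (x (Suc l)) + funk C (x (Suc l)) (x 0)"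
    using funk_tri assms by blast
  then show ?case using Suc by simp
qed

theorem mainTheorem11:
  fixes C :: "'v::euclidean_space set" and x :: "nat \<Rightarrow> 'v"
  assumes "open_cone C"
  shows "almost_geodesic C (hilbert_fn C) x \<longleftrightarrow>
         almost_geodesic C (funk C) x \<and> almost_geodesic C (rev_funk C) x"
proof
  assume H: "almost_geodesic C (hilbert_fn C) x"
  then have xC: "\<forall>l. x l \<in> C" and "\<exists>eps>0. \<forall>l\<ge>1. (\<Sum>i=1..l. hilbert_fn C (x (i - 1)) (x i)) \<le> hilbert_fn C (x 0) (x l) + eps"
    unfolding almost_geodesic_def by auto
  then obtain eps where eps: "eps > 0" "\<forall>l\<ge>1. (\<Sum>i=1..l. hilbert_fn C (x (i - 1)) (x i)) \<le> hilbert_fn C (x 0) (x l) + eps" by blast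
  have both: "(\<Sum>i=1..l. funk C (x (i - 1)) (x i)) \<le> funk C (x 0) (x l) + eps \<and>
     (\<Sum>i=1..l. funk C (x i) (x (i - 1))) \<le> funk C (x l) (x 0) + eps" if l1: "l \<ge> 1" for l
  proof -
    obtain m where m: "l = Suc m" using l1 by (cases l) auto
    have "(\<Sum>i=1..l. funk C (x (i - 1)) (x i)) + (\<Sum>i=1..l. funk C (x i) (x (i - 1)))
       \<le> funk C (x 0) (x l) + funk C (x l) (x 0) + eps"
      using eps(2) that by (simp add: hilbert_fn_def sum.distrib)
    moreover have "funk C (x 0) (x l) \<le> (\<Sum>i=1..l. funk C (x (i - 1)) (x i))"
      using sum_F[OF assms xC] m by simp
    moreover have "funk C (x l) (x 0) \<le> (\<Sum>i=1..l. funk C (x i) (x (i - 1)))"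
      using sum_RF[OF assms xC] m by simp
    ultimately show ?thesis by linarith
  qed
  show "almost_geodesic C (funk C) x \<and> almost_geodesic C (rev_funk C) x"
    unfolding almost_geodesic_def rev_funk_def using xC eps(1) both by blast
next
  assume "almost_geodesic C (funk C) x \<and> almost_geodesic C (rev_funk C) x"
  then obtain e1 e2 where xC: "\<forall>l. x l \<in> C" and e1: "e1 > 0" "\<forall>l\<ge>1. (\<Sum>i=1..l. funk C (x (i - 1)) (x i)) \<le> funk C (x 0) (x l) + e1"
    and e2: "e2 > 0" "\<forall>l\<ge>1. (\<Sum>i=1..l. funk C (x i) (x (i - 1))) \<le> funk C (x l) (x 0) + e2"
    unfolding almost_geodesic_def rev_funk_def by blast
  have "\<forall>l\<ge>1. (\<Sum>i=1..l. hilbert_fn C (x (i - 1)) (x i)) \<le> hilbert_fn C (x 0) (x l) + (e1 + e2)"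
  proof (intro allI impI)
    fix l :: nat assume "l \<ge> 1"
    thus "(\<Sum>i=1..l. hilbert_fn C (x (i - 1)) (x i)) \<le> hilbert_fn C (x 0) (x l) + (e1 + e2)"
      using e1(2) e2(2) by (simp add: hilbert_fn_def sum.distrib) (smt (verit, best))
  qed
  thus "almost_geodesic C (hilbert_fn C) x"
    unfolding almost_geodesic_def using xC e1(1) e2(1) by (metis add_pos_pos)
qed

end
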